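(* Let $n\ge1$, $a\ge0$, $A=|\psi\rangle\langle\psi|$ for an $n$-qubit pure state $|\psi\rangle$, and let $U$ be a $(2,a,0)$-block-encoding of $A$. Then, using $O(1)$ queries to $U$ (and its controlled version and inverse), one can implement a unitary that is a $(1,a+3,0)$-block-encoding of $I-2A$.
   Context: For an $n$-qubit operator $A$, a unitary $U$ on $n+a$ qubits is an $(\alpha,a,\varepsilon)$-block-encoding of $A$ if $\|\alpha(I_n\otimes\langle0|^{\otimes a})U(I_n\otimes|0\rangle^{\otimes a})-A\|\le\varepsilon$ (operator norm). *)

theory Defs
  imports Complex_Main "Jordan_Normal_Form.Matrix"
begin

(* Qubit conventions: a matrix on k qubits has dimension 2^k x 2^k; in a tensor
   product A (x) B the first factor carries the more significant index bits.
   System qubits come first, ancilla qubits last, as in I_n (x) <0|^{(x) a}. *)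

definition kron :: "complex mat \<Rightarrow> complex mat \<Rightarrow> complex mat" where
  "kron A B = mat (dim_row A * dim_row B) (dim_col A * dim_col B)
     (\<lambda>(i,j). A $$ (i div dim_row B, j div dim_col B) * B $$ (i mod dim_row B, j mod dim_col B))"

definition cadj :: "complex mat \<Rightarrow> complex mat" where
  "cadj M = mat (dim_col M) (dim_row M) (\<lambda>(i,j). cnj (M $$ (j,i)))"

definition unitary_mat :: "nat \<Rightarrow> complex mat \<Rightarrow> bool" where
  "unitary_mat d U \<longleftrightarrow> U \<in> carrier_mat d d \<and> U * cadj U = 1\<^sub>m d \<and> cadj U * U = 1\<^sub>m d"

definition cvec_norm :: "complex vec \<Rightarrow> real" where
  "cvec_norm v = sqrt (\<Sum>i<dim_vec v. (cmod (v $ i))\<^sup>2)"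

definition op_norm :: "complex mat \<Rightarrow> real" where
  "op_norm M = Sup {cvec_norm (M *\<^sub>v v) | v. v \<in> carrier_vec (dim_col M) \<and> cvec_norm v \<le> 1}"

(* (I_n (x) <0|^{(x) a}) U (I_n (x) |0>^{(x) a}) for U on n+a qubits *)
definition top_block :: "nat \<Rightarrow> nat \<Rightarrow> complex mat \<Rightarrow> complex mat" where
  "top_block n a U = mat (2^n) (2^n) (\<lambda>(i,j). U $$ (i * 2^a, j * 2^a))"

definition block_encoding :: "real \<Rightarrow> nat \<Rightarrow> real \<Rightarrow> nat \<Rightarrow> complex mat \<Rightarrow> complex mat \<Rightarrow> bool" where
  "block_encoding \<alpha> a \<epsilon> n U A \<longleftrightarrow>
     unitary_mat (2^(n+a)) U \<and> A \<in> carrier_mat (2^n) (2^n) \<and>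
     op_norm (complex_of_real \<alpha> \<cdot>\<^sub>m top_block n a U - A) \<le> \<epsilon>"

definition proj :: "complex vec \<Rightarrow> complex mat" where
  "proj psi = mat (dim_vec psi) (dim_vec psi) (\<lambda>(i,j). psi $ i * cnj (psi $ j))"

definition ctrl :: "complex mat \<Rightarrow> complex mat" where
  "ctrl U = kron (mat 2 2 (\<lambda>(i,j). if i = 0 \<and> j = 0 then 1 else 0)) (1\<^sub>m (dim_row U))
          + kron (mat 2 2 (\<lambda>(i,j). if i = 1 \<and> j = 1 then 1 else 0)) U"

(* Query gates to U (on n+a qubits) inside a register of n+a+3 qubits. *)
datatype query = QU | QUinv | QcU | QcUinv

fun query_mat :: "query \<Rightarrow> complex mat \<Rightarrow> complex mat" where
  "query_mat QU U = kron U (1\<^sub>m 8)"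
| "query_mat QUinv U = kron (cadj U) (1\<^sub>m 8)"
| "query_mat QcU U = kron (ctrl U) (1\<^sub>m 4)"
| "query_mat QcUinv U = kron (ctrl (cadj U)) (1\<^sub>m 4)"

(* circuit  V_k Q_k ... V_1 Q_1 V_0 : fixed gates V_i, queries Q_i *)
fun run_circuit :: "complex mat \<Rightarrow> (query \<times> complex mat) list \<Rightarrow> complex mat \<Rightarrow> complex mat" where
  "run_circuit V0 [] U = V0"
| "run_circuit V0 ((q, V) # qs) U = run_circuit (V * query_mat q U * V0) qs U"

end

theory Submission
  imports Defs "HOL-Analysis.L2_Norm"
begin

lemma cadj_carrier[simp]: "M \<in> carrier_mat r c \<Longrightarrow> cadj M \<in> carrier_mat c r"
  by (simp add: cadj_def)

lemma cadj_dims[simp]: "dim_row (cadj M) = dim_col M" "dim_col (cadj M) = dim_row M"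
  by (simp_all add: cadj_def)

lemma cadj_index[simp]: "i < dim_col M \<Longrightarrow> j < dim_row M \<Longrightarrow> cadj M $$ (i,j) = cnj (M $$ (j,i))"
  by (simp add: cadj_def)

lemma cadj_mult: assumes "A \<in> carrier_mat r k" "B \<in> carrier_mat k c"
  shows "cadj (A * B) = cadj B * cadj A"
  apply (rule eq_matI)
  using assms by (auto simp: scalar_prod_def row_def col_def intro!: sum.cong)

lemma cadj_one[simp]: "cadj (1\<^sub>m n) = 1\<^sub>m n"
  by (rule eq_matI) auto

lemma assoc_d: "dim_col A = dim_row B \<Longrightarrow> dim_col B = dim_row C \<Longrightarrow> A * B * C = A * (B * C)"
  by (rule assoc_mult_mat[of A "dim_row A" "dim_col A" B "dim_col B" C "dim_col C"]) auto

lemma dl_add: "dim_col A = dim_row B \<Longrightarrow> dim_row C = dim_row B \<Longrightarrow> dim_col C = dim_col B \<Longrightarrow> A * (B + C) = A * B + A * C"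
  by (rule mult_add_distrib_mat[of A "dim_row A" "dim_col A" B "dim_col B"]) auto
lemma dr_add: "dim_col A = dim_row C \<Longrightarrow> dim_row A = dim_row B \<Longrightarrow> dim_col A = dim_col B \<Longrightarrow> (A + B) * C = A * C + B * C"
  by (rule add_mult_distrib_mat[of A "dim_row A" "dim_col A" B C "dim_col C"]) auto
lemma dl_minus: "dim_col (A::complex mat) = dim_row B \<Longrightarrow> dim_row C = dim_row B \<Longrightarrow> dim_col C = dim_col B \<Longrightarrow> A * (B - C) = A * B - A * C"
  by (rule mult_minus_distrib_mat[of A "dim_row A" "dim_col A" B "dim_col B"]) auto
lemma dr_minus: "dim_col (A::complex mat) = dim_row C \<Longrightarrow> dim_row A = dim_row B \<Longrightarrow> dim_col A = dim_col B \<Longrightarrow> (A - B) * C = A * C - B * C"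
  by (rule minus_mult_distrib_mat[of A "dim_row A" "dim_col A" B C "dim_col C"]) auto
lemma dl_smult: "dim_col (A::complex mat) = dim_row B \<Longrightarrow> A * (c \<cdot>\<^sub>m B) = c \<cdot>\<^sub>m (A * B)"
  by (rule mult_smult_distrib[of A "dim_row A" "dim_col A" B "dim_col B"]) auto
lemma dr_smult: "dim_col (A::complex mat) = dim_row B \<Longrightarrow> (c \<cdot>\<^sub>m A) * B = c \<cdot>\<^sub>m (A * B)"
  by (rule mult_smult_assoc_mat[of A "dim_row A" "dim_col A" B "dim_col B"]) auto

lemmas dsimps = assoc_d dl_add dr_add dl_minus dr_minus dl_smult dr_smult

lemma unitary_mult: "unitary_mat d A \<Longrightarrow> unitary_mat d B \<Longrightarrow> unitary_mat d (A * B)"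
proof -
  assume a: "unitary_mat d A" and b: "unitary_mat d B"
  hence A: "A \<in> carrier_mat d d" and B: "B \<in> carrier_mat d d" and
    a1: "A * cadj A = 1\<^sub>m d" and a2: "cadj A * A = 1\<^sub>m d" and
    b1: "B * cadj B = 1\<^sub>m d" and b2: "cadj B * B = 1\<^sub>m d" by (auto simp: unitary_mat_def)
  have [simp]: "dim_row A = d" "dim_col A = d" "dim_row B = d" "dim_col B = d" using A B by auto
  have c: "cadj (A*B) = cadj B * cadj A" using cadj_mult[OF A B] .
  have "A * B * (cadj B * cadj A) = A * (B * cadj B) * cadj A"
    using A B by (simp add: assoc_d)
  also have "\<dots> = 1\<^sub>m d" using b1 a1 A by simp
  finally have 1: "A * B * cadj (A*B) = 1\<^sub>m d" using c by simp
  have "cadj B * cadj A * (A * B) = cadj B * (cadj A * A) * B"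
    using A B by (simp add: assoc_d)
  also have "\<dots> = 1\<^sub>m d" using a2 b2 B by simp
  finally have 2: "cadj (A*B) * (A * B) = 1\<^sub>m d" using c by simp
  show ?thesis using 1 2 A B by (auto simp: unitary_mat_def)
qed


lemma one_mult_d: "dim_row A = n \<Longrightarrow> 1\<^sub>m n * (A::complex mat) = A"
  by (rule left_mult_one_mat[of A n "dim_col A"]) auto
lemma mult_one_d: "dim_col A = n \<Longrightarrow> (A::complex mat) * 1\<^sub>m n = A"
  by (rule right_mult_one_mat[of A "dim_row A" n]) auto

lemma walk:
  fixes P C Q R :: "complex mat"
  assumes car: "P \<in> carrier_mat N N" "C \<in> carrier_mat N N" "Q \<in> carrier_mat N N"
    and PP: "P * P = P" and CC: "C * C = 1\<^sub>m N" and PQ: "P * Q = Q" and QP: "Q * P = Q"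
    and QQ: "Q * Q = Q" and X: "P * C * P = (1/2) \<cdot>\<^sub>m Q - P" and Rdef: "R = 2 \<cdot>\<^sub>m P - 1\<^sub>m N"
  shows "P * (C * R * C * R * C * R) * P = 2 \<cdot>\<^sub>m Q - P"
proof -
  have [simp]: "dim_row P = N" "dim_col P = N" "dim_row C = N" "dim_col C = N"
    "dim_row Q = N" "dim_col Q = N" using car by auto
  have PP': "P * (P * Z) = P * Z" if "dim_row Z = N" for Z
    using that by (simp flip: assoc_d add: PP)
  have CC': "C * (C * Z) = Z" if "dim_row Z = N" for Z
    using that by (simp flip: assoc_d add: CC one_mult_d)
  have PQ': "P * (Q * Z) = Q * Z" if "dim_row Z = N" for Z
    using that by (simp flip: assoc_d add: PQ)
  have QP': "Q * (P * Z) = Q * Z" if "dim_row Z = N" for Z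
    using that by (simp flip: assoc_d add: QP)
  have QQ': "Q * (Q * Z) = Q * Z" if "dim_row Z = N" for Z
    using that by (simp flip: assoc_d add: QQ)
  have X': "P * (C * P) = (1/2) \<cdot>\<^sub>m Q - P" using X by (simp add: assoc_d)
  have L1: "P * (C * R * C * R * C * R) * P = 4 \<cdot>\<^sub>m (P * (C * P) * (P * (C * P)) * (P * (C * P)))
     - 2 \<cdot>\<^sub>m (P * (C * P)) - 2 \<cdot>\<^sub>m (P * (C * P)) + P * (C * P)"
    unfolding Rdef apply (simp add: dsimps PP PP' CC CC' one_mult_d mult_one_d)
    by (rule eq_matI; simp add: algebra_simps del: index_mult_mat(1))
  show ?thesis unfolding L1 X' apply (simp add: dsimps PP PP' PQ PQ' QP QP' QQ QQ' one_mult_d mult_one_d)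
    by (rule eq_matI; simp add: algebra_simps del: index_mult_mat(1))
qed

lemma kron_dims[simp]: "dim_row (kron A B) = dim_row A * dim_row B" "dim_col (kron A B) = dim_col A * dim_col B"
  by (simp_all add: kron_def)

lemma kron_one_index:
  assumes "M \<in> carrier_mat N N" "0 < m" "i < N * m" "j < N * m"
  shows "kron M (1\<^sub>m m) $$ (i, j) = (if i mod m = j mod m then M $$ (i div m, j div m) else 0)"
  using assms by (auto simp: kron_def)

lemma inner_group:
  fixes f :: "nat \<Rightarrow> complex"
  assumes m: "0 < m" and r: "r < m"
  shows "(\<Sum>k\<in>{l*m..<l*m+m}. if r = k mod m then f (k div m) else 0) = f l"
proof -
  have "(\<Sum>k\<in>{l*m..<l*m+m}. if r = k mod m then f (k div m) else 0)
      = (\<Sum>k\<in>{l*m..<l*m+m}. if k = l*m + r then f l else 0)"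
  proof (rule sum.cong)
    fix k assume k: "k \<in> {l*m..<l*m+m}"
    then obtain t where t: "k = l*m + t" "t < m" by (metis add_less_cancel_left atLeastLessThan_iff le_Suc_ex)
    have "k div m = l" "k mod m = t" using t m by auto
    then show "(if r = k mod m then f (k div m) else 0) = (if k = l*m + r then f l else 0)"
      using t by auto
  qed simp
  also have "\<dots> = f l" using r by (simp add: sum.delta)
  finally show ?thesis .
qed

lemma lift_mult:
  assumes A: "A \<in> carrier_mat N N" and B: "B \<in> carrier_mat N N" and m: "0 < m"
  shows "kron A (1\<^sub>m m) * kron B (1\<^sub>m m) = kron (A * B) (1\<^sub>m m)"
proof (rule eq_matI)
  fix i j assume "i < dim_row (kron (A * B) (1\<^sub>m m))" "j < dim_col (kron (A * B) (1\<^sub>m m))"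
  hence i: "i < N * m" and j: "j < N * m" using A B by auto
  have idm: "i div m < N" "j div m < N" using i j m by (auto simp: less_mult_imp_div_less)
  have "(kron A (1\<^sub>m m) * kron B (1\<^sub>m m)) $$ (i, j)
      = (\<Sum>k<N*m. kron A (1\<^sub>m m) $$ (i, k) * kron B (1\<^sub>m m) $$ (k, j))"
    using i j A B by (simp add: scalar_prod_def lessThan_atLeast0)
  also have "\<dots> = (\<Sum>k<N*m. if i mod m = k mod m then
        (if k mod m = j mod m then A $$ (i div m, k div m) * B $$ (k div m, j div m) else 0) else 0)"
    by (rule sum.cong) (use i j A B m in \<open>auto simp: kron_one_index\<close>)
  also have "\<dots> = (\<Sum>l<N. \<Sum>k\<in>{l*m..<l*m+m}. if i mod m = k mod m then
        (if k mod m = j mod m then A $$ (i div m, k div m) * B $$ (k div m, j div m) else 0) else 0)"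
    by (rule sum.nat_group[symmetric])
  also have "\<dots> = (\<Sum>l<N. if i mod m = j mod m then A $$ (i div m, l) * B $$ (l, j div m) else 0)"
  proof (rule sum.cong[OF refl])
    fix l
    let ?g = "\<lambda>t. if i mod m = j mod m then A $$ (i div m, t) * B $$ (t, j div m) else 0"
    have "(\<Sum>k\<in>{l*m..<l*m+m}. if i mod m = k mod m then
        (if k mod m = j mod m then A $$ (i div m, k div m) * B $$ (k div m, j div m) else 0) else 0)
      = (\<Sum>k\<in>{l*m..<l*m+m}. if i mod m = k mod m then ?g (k div m) else 0)"
      by (rule sum.cong) auto
    also have "\<dots> = ?g l" by (rule inner_group) (use m in auto)
    finally show "(\<Sum>k\<in>{l*m..<l*m+m}. if i mod m = k mod m then
        (if k mod m = j mod m then A $$ (i div m, k div m) * B $$ (k div m, j div m) else 0) else 0) = ?g l" .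
  qed
  also have "\<dots> = kron (A * B) (1\<^sub>m m) $$ (i, j)"
    using i j A B m idm by (auto simp: kron_one_index[OF mult_carrier_mat[OF A B] m i j] scalar_prod_def lessThan_atLeast0)
  finally show "(kron A (1\<^sub>m m) * kron B (1\<^sub>m m)) $$ (i, j) = kron (A * B) (1\<^sub>m m) $$ (i, j)" .
qed (use A B in auto)

lemma cadj_kron_one:
  assumes M: "M \<in> carrier_mat N N" and m: "0 < m"
  shows "cadj (kron M (1\<^sub>m m)) = kron (cadj M) (1\<^sub>m m)"
proof (rule eq_matI)
  fix i j assume "i < dim_row (kron (cadj M) (1\<^sub>m m))" "j < dim_col (kron (cadj M) (1\<^sub>m m))"
  hence i: "i < N * m" and j: "j < N * m" using M by auto
  have "i div m < N" "j div m < N" using i j m by (auto simp: less_mult_imp_div_less)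
  moreover have "cadj (kron M (1\<^sub>m m)) $$ (i, j) = cnj (kron M (1\<^sub>m m) $$ (j, i))"
    using i j M by simp
  ultimately show "cadj (kron M (1\<^sub>m m)) $$ (i, j) = kron (cadj M) (1\<^sub>m m) $$ (i, j)"
    using kron_one_index[OF M m j i] kron_one_index[OF cadj_carrier[OF M] m i j] M by auto
qed (use M in auto)

lemma kron_one_one:
  assumes m: "0 < m" shows "kron (1\<^sub>m N) (1\<^sub>m m) = 1\<^sub>m (N * m)"
proof (rule eq_matI)
  fix i j assume "i < dim_row (1\<^sub>m (N * m))" "j < dim_col (1\<^sub>m (N * m))"
  hence i: "i < N * m" and j: "j < N * m" by auto
  have "i div m < N" "j div m < N" using i j m by (auto simp: less_mult_imp_div_less)
  moreover have "(i mod m = j mod m \<and> i div m = j div m) \<longleftrightarrow> i = j"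
    by (metis div_mult_mod_eq)
  ultimately show "kron (1\<^sub>m N) (1\<^sub>m m) $$ (i, j) = 1\<^sub>m (N * m) $$ (i, j)"
    using kron_one_index[OF one_carrier_mat m i j] i j by auto
qed auto

lemma unitary_lift:
  assumes "unitary_mat N M" "0 < m"
  shows "unitary_mat (N * m) (kron M (1\<^sub>m m))"
proof -
  have M: "M \<in> carrier_mat N N" and 1: "M * cadj M = 1\<^sub>m N" and 2: "cadj M * M = 1\<^sub>m N"
    using assms by (auto simp: unitary_mat_def)
  have cM: "cadj M \<in> carrier_mat N N" using M by simp
  have c: "cadj (kron M (1\<^sub>m m)) = kron (cadj M) (1\<^sub>m m)" by (rule cadj_kron_one[OF M assms(2)])
  have a: "kron M (1\<^sub>m m) * kron (cadj M) (1\<^sub>m m) = 1\<^sub>m (N * m)"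
    unfolding lift_mult[OF M cM assms(2)] 1 by (rule kron_one_one[OF assms(2)])
  have b: "kron (cadj M) (1\<^sub>m m) * kron M (1\<^sub>m m) = 1\<^sub>m (N * m)"
    unfolding lift_mult[OF cM M assms(2)] 2 by (rule kron_one_one[OF assms(2)])
  have "kron M (1\<^sub>m m) \<in> carrier_mat (N * m) (N * m)" by (rule carrier_matI) (use M in auto)
  thus ?thesis unfolding unitary_mat_def c using a b by simp
qed

definition dg :: "nat \<Rightarrow> (nat \<Rightarrow> complex) \<Rightarrow> complex mat" where
  "dg N f = mat N N (\<lambda>(i,j). if i = j then f i else 0)"

lemma dg_carrier[simp]: "dg N f \<in> carrier_mat N N" and dg_dims[simp]: "dim_row (dg N f) = N" "dim_col (dg N f) = N"
  by (simp_all add: dg_def)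

lemma dg_index[simp]: "i < N \<Longrightarrow> j < N \<Longrightarrow> dg N f $$ (i, j) = (if i = j then f i else 0)"
  by (simp add: dg_def)

lemma dg_mult_index:
  assumes "M \<in> carrier_mat N c" "i < N" "j < c"
  shows "(dg N f * M) $$ (i, j) = f i * M $$ (i, j)"
proof -
  have "(dg N f * M) $$ (i, j) = (\<Sum>t\<in>{0..<N}. (if i = t then f i else 0) * M $$ (t, j))"
    using assms by (auto simp: scalar_prod_def)
  also have "\<dots> = (\<Sum>t\<in>{0..<N}. (if i = t then f i * M $$ (i, j) else 0))"
    by (rule sum.cong) auto
  also have "\<dots> = f i * M $$ (i, j)" using assms by (simp add: sum.delta)
  finally show ?thesis .
qed

lemma mult_dg_index:
  assumes "M \<in> carrier_mat r N" "i < r" "j < N"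
  shows "(M * dg N f) $$ (i, j) = M $$ (i, j) * f j"
proof -
  have "(M * dg N f) $$ (i, j) = (\<Sum>t\<in>{0..<N}. M $$ (i, t) * (if t = j then f t else 0))"
    using assms by (auto simp: scalar_prod_def)
  also have "\<dots> = (\<Sum>t\<in>{0..<N}. (if t = j then M $$ (i, j) * f j else 0))"
    by (rule sum.cong) auto
  also have "\<dots> = M $$ (i, j) * f j" using assms by (simp add: sum.delta')
  finally show ?thesis .
qed

lemma dg_mult_dg: "dg N f * dg N g = dg N (\<lambda>i. f i * g i)"
  apply (rule eq_matI)
  apply (subst dg_mult_index[OF dg_carrier])
  by auto

lemma cadj_dg: "cadj (dg N f) = dg N (\<lambda>i. cnj (f i))"
  by (rule eq_matI) auto

lemma unitary_dg: assumes "\<And>i. i < N \<Longrightarrow> f i * cnj (f i) = 1"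
  shows "unitary_mat N (dg N f)"
proof -
  have "dg N (\<lambda>i. f i * cnj (f i)) = 1\<^sub>m N" "dg N (\<lambda>i. cnj (f i) * f i) = 1\<^sub>m N"
    by (rule eq_matI; auto simp: assms mult.commute[of "cnj _"])+
  thus ?thesis unfolding unitary_mat_def cadj_dg dg_mult_dg by simp
qed

lemma core:
  fixes psi :: "complex vec" and U :: "complex mat"
  assumes d: "0 < d" and nrm: "(\<Sum>l<m. (cmod (psi $ l))\<^sup>2) = 1"
    and U: "unitary_mat (m * d) U"
    and top: "\<And>i j. i < m \<Longrightarrow> j < m \<Longrightarrow> U $$ (i * d, j * d) = (1/2) * (psi $ i * cnj (psi $ j))"
    and Rdef: "R = dg (m * d) (\<lambda>k. if k mod d = 0 then 1 else -1)"
    and Ndef: "Neg = dg (m * d) (\<lambda>k. -1)"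
    and ij: "i < m" "j < m"
  shows "(Neg * (cadj U * (R * (U * (R * (cadj U * (R * (U * (R * (cadj U * (R * (U * R)))))))))))) $$ (i * d, j * d)
     = (if i = j then 1 else 0) - 2 * (psi $ i * cnj (psi $ j))"
proof -
  define N where "N = m * d"
  define p where "p = (\<lambda>k::nat. if k mod d = 0 then (1::complex) else 0)"
  define P where "P = dg N p"
  define Psi where "Psi = (\<lambda>k. if k mod d = 0 then psi $ (k div d) else 0)"
  define Q where "Q = mat N N (\<lambda>(i, j). Psi i * cnj (Psi j))"
  define C where "C = cadj U * R * U"
  have Ucar: "U \<in> carrier_mat N N" and UU: "U * cadj U = 1\<^sub>m N" and UU2: "cadj U * U = 1\<^sub>m N"
    using U by (auto simp: unitary_mat_def N_def)
  have [simp]: "dim_row U = N" "dim_col U = N" "dim_row P = N" "dim_col P = N" "dim_row R = N" "dim_col R = N"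
    "dim_row Q = N" "dim_col Q = N" "dim_row Neg = N" "dim_col Neg = N"
    using Ucar by (auto simp: P_def Q_def Rdef Ndef N_def)
  have car: "P \<in> carrier_mat N N" "C \<in> carrier_mat N N" "Q \<in> carrier_mat N N" "R \<in> carrier_mat N N"
    by (rule carrier_matI; simp add: C_def)+
  have [simp]: "dim_row C = N" "dim_col C = N" by (simp_all add: C_def)
  have idx: "\<And>k. k < N \<Longrightarrow> k mod d = 0 \<Longrightarrow> k div d < m \<and> k = (k div d) * d"
    using d by (auto simp: N_def less_mult_imp_div_less)
  have PP: "P * P = P" unfolding P_def dg_mult_dg by (rule arg_cong[where f="dg N"]) (auto simp: p_def)
  have RR: "R * R = 1\<^sub>m N" unfolding Rdef dg_mult_dg N_def[symmetric]
    by (rule eq_matI) auto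
  have UU': "U * (cadj U * Z) = Z" if "dim_row Z = N" for Z
    using that by (simp flip: assoc_d add: UU one_mult_d)
  have UU2': "cadj U * (U * Z) = Z" if "dim_row Z = N" for Z
    using that by (simp flip: assoc_d add: UU2 one_mult_d)
  have RR': "R * (R * Z) = Z" if "dim_row Z = N" for Z
    using that by (simp flip: assoc_d add: RR one_mult_d)
  have PP': "P * (P * Z) = P * Z" if "dim_row Z = N" for Z
    using that by (simp flip: assoc_d add: PP)
  have CC: "C * C = 1\<^sub>m N" unfolding C_def
    by (simp add: assoc_d UU' RR' UU2)
  have Qcar: "Q \<in> carrier_mat N N" by (rule car)
  have PQ: "P * Q = Q"
  proof (rule eq_matI)
    fix k l assume "k < dim_row Q" "l < dim_col Q"
    hence k: "k < N" and l: "l < N" by auto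
    show "(P * Q) $$ (k, l) = Q $$ (k, l)"
      unfolding P_def dg_mult_index[OF Qcar k l] using k l by (auto simp: p_def Q_def Psi_def)
  qed auto
  have QP: "Q * P = Q"
  proof (rule eq_matI)
    fix k l assume "k < dim_row Q" "l < dim_col Q"
    hence k: "k < N" and l: "l < N" by auto
    show "(Q * P) $$ (k, l) = Q $$ (k, l)"
      unfolding P_def mult_dg_index[OF Qcar k l] using k l by (auto simp: p_def Q_def Psi_def)
  qed auto
  have sumPsi: "(\<Sum>k<N. Psi k * cnj (Psi k)) = 1"
  proof -
    have "(\<Sum>k<N. Psi k * cnj (Psi k)) = (\<Sum>l<m. \<Sum>k\<in>{l*d..<l*d+d}. Psi k * cnj (Psi k))"
      unfolding N_def by (rule sum.nat_group[symmetric])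
    also have "\<dots> = (\<Sum>l<m. psi $ l * cnj (psi $ l))"
    proof (rule sum.cong[OF refl])
      fix l
      have "(\<Sum>k\<in>{l*d..<l*d+d}. Psi k * cnj (Psi k)) =
          (\<Sum>k\<in>{l*d..<l*d+d}. if 0 = k mod d then psi $ (k div d) * cnj (psi $ (k div d)) else 0)"
        by (rule sum.cong) (auto simp: Psi_def)
      also have "\<dots> = psi $ l * cnj (psi $ l)" by (rule inner_group) (use d in auto)
      finally show "(\<Sum>k\<in>{l*d..<l*d+d}. Psi k * cnj (Psi k)) = psi $ l * cnj (psi $ l)" .
    qed
    also have "\<dots> = of_real (\<Sum>l<m. (cmod (psi $ l))\<^sup>2)"
      by (simp add: complex_norm_square[symmetric] del: of_real_power)
    finally show ?thesis using nrm by simp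
  qed
  have QQ: "Q * Q = Q"
  proof (rule eq_matI)
    fix i j assume "i < dim_row Q" "j < dim_col Q"
    hence i: "i < N" and j: "j < N" by auto
    have "(Q * Q) $$ (i, j) = (\<Sum>k\<in>{0..<N}. Psi i * cnj (Psi k) * (Psi k * cnj (Psi j)))"
      using i j by (simp add: Q_def scalar_prod_def)
    also have "\<dots> = Psi i * cnj (Psi j) * (\<Sum>k<N. Psi k * cnj (Psi k))"
      by (simp add: sum_distrib_left lessThan_atLeast0 algebra_simps)
    also have "\<dots> = Q $$ (i, j)" using i j sumPsi by (simp add: Q_def)
    finally show "(Q * Q) $$ (i, j) = Q $$ (i, j)" .
  qed auto
  have PMP: "(P * (M * P)) $$ (k, l) = p k * M $$ (k, l) * p l" if "M \<in> carrier_mat N N" "k < N" "l < N" for M k l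
  proof -
    have MP: "M * P \<in> carrier_mat N N" using that(1) car(1) by (rule mult_carrier_mat)
    show ?thesis unfolding P_def using dg_mult_index[OF MP[unfolded P_def] that(2,3)] mult_dg_index[OF that] by simp
  qed
  have PUP: "P * (U * P) = (1/2) \<cdot>\<^sub>m Q"
  proof (rule eq_matI)
    fix k l assume "k < dim_row ((1/2) \<cdot>\<^sub>m Q)" "l < dim_col ((1/2) \<cdot>\<^sub>m Q)"
    hence k: "k < N" and l: "l < N" by auto
    show "(P * (U * P)) $$ (k, l) = ((1/2) \<cdot>\<^sub>m Q) $$ (k, l)"
      unfolding PMP[OF Ucar k l] using k l idx[OF k] idx[OF l] top[of "k div d" "l div d"]
      by (auto simp: p_def Q_def Psi_def)
  qed auto
  have PUP2: "P * (cadj U * P) = (1/2) \<cdot>\<^sub>m Q"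
  proof (rule eq_matI)
    fix k l assume "k < dim_row ((1/2) \<cdot>\<^sub>m Q)" "l < dim_col ((1/2) \<cdot>\<^sub>m Q)"
    hence k: "k < N" and l: "l < N" by auto
    show "(P * (cadj U * P)) $$ (k, l) = ((1/2) \<cdot>\<^sub>m Q) $$ (k, l)"
      unfolding PMP[OF cadj_carrier[OF Ucar] k l] using k l idx[OF k] idx[OF l] top[of "l div d" "k div d"]
      apply (auto simp: p_def Q_def Psi_def)
      apply (drule arg_cong[where f=cnj])
      by (simp add: mult.commute)
  qed auto
  have R2: "R = 2 \<cdot>\<^sub>m P - 1\<^sub>m N"
    by (rule eq_matI) (auto simp: Rdef P_def p_def N_def)
  have PUPUP: "P * (cadj U * (P * (U * P))) = (1/4) \<cdot>\<^sub>m Q"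
  proof -
    have "(P * (cadj U * P)) * (P * (U * P)) = (1/4) \<cdot>\<^sub>m Q"
      unfolding PUP PUP2 apply (simp add: dsimps QQ)
      by (rule eq_matI) auto
    thus ?thesis by (simp add: assoc_d PP')
  qed
  have X: "P * C * P = (1/2) \<cdot>\<^sub>m Q - P"
    unfolding C_def R2 apply (simp add: dsimps one_mult_d mult_one_d UU2' PP PUPUP)
    by (rule eq_matI) auto
  have W: "P * (C * R * C * R * C * R) * P = 2 \<cdot>\<^sub>m Q - P"
    by (rule walk[OF car(1-3) PP CC PQ QP QQ X R2])
  have NY: "Neg * Y = (-1) \<cdot>\<^sub>m Y" if "Y \<in> carrier_mat N N" for Y
  proof (rule eq_matI)
    fix k l assume "k < dim_row ((-1) \<cdot>\<^sub>m Y)" "l < dim_col ((-1) \<cdot>\<^sub>m Y)"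
    hence k: "k < N" and l: "l < N" using that by auto
    show "(Neg * Y) $$ (k, l) = ((-1) \<cdot>\<^sub>m Y) $$ (k, l)"
      unfolding Ndef N_def[symmetric] dg_mult_index[OF that k l] using k l that by auto
  qed (use that in auto)
  let ?W = "cadj U * (R * (U * (R * (cadj U * (R * (U * (R * (cadj U * (R * (U * R))))))))))"
  have Wc: "?W = C * R * C * R * C * R" unfolding C_def by (simp add: assoc_d)
  have Wcar: "?W \<in> carrier_mat N N" by (rule carrier_matI) simp_all
  have id: "i * d < N" "j * d < N" using ij d by (auto simp: N_def)
  have "(P * ((Neg * ?W) * P)) $$ (i * d, j * d) = (Neg * ?W) $$ (i * d, j * d)"
    using PMP[of "Neg * ?W", OF carrier_matI id] by (simp add: p_def)
  moreover have "P * ((Neg * ?W) * P) = (-1) \<cdot>\<^sub>m (P * (C * R * C * R * C * R) * P)"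
    unfolding NY[OF Wcar] unfolding Wc by (simp add: dsimps)
  ultimately have "(Neg * ?W) $$ (i * d, j * d) = ((-1) \<cdot>\<^sub>m (2 \<cdot>\<^sub>m Q - P)) $$ (i * d, j * d)"
    unfolding W by simp
  also have "\<dots> = (if i = j then 1 else 0) - 2 * (psi $ i * cnj (psi $ j))"
    using id ij d by (auto simp: Q_def Psi_def P_def p_def)
  finally show ?thesis .
qed

lemma cvec_norm_L2: "cvec_norm v = L2_set (\<lambda>i. cmod (v $ i)) {..<dim_vec v}"
  by (simp add: cvec_norm_def L2_set_def)

lemma cvec_norm_comp: "i < dim_vec v \<Longrightarrow> cmod (v $ i) \<le> cvec_norm v"
  unfolding cvec_norm_L2 by (rule member_le_L2_set) auto

lemma cvec_norm_le_sum: "cvec_norm v \<le> (\<Sum>i<dim_vec v. cmod (v $ i))"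
  unfolding cvec_norm_L2 by (rule L2_set_le_sum) auto

lemma op_norm_bdd:
  assumes M: "M \<in> carrier_mat r c"
  shows "bdd_above {cvec_norm (M *\<^sub>v v) | v. v \<in> carrier_vec (dim_col M) \<and> cvec_norm v \<le> 1}"
proof (rule bdd_aboveI)
  fix x assume "x \<in> {cvec_norm (M *\<^sub>v v) | v. v \<in> carrier_vec (dim_col M) \<and> cvec_norm v \<le> 1}"
  then obtain v where v: "v \<in> carrier_vec c" "cvec_norm v \<le> 1" and x: "x = cvec_norm (M *\<^sub>v v)"
    using M by auto
  have vj: "cmod (v $ j) \<le> 1" if "j < c" for j
    using cvec_norm_comp[of j v] v that by auto
  have "x \<le> (\<Sum>i<r. cmod ((M *\<^sub>v v) $ i))" unfolding x using cvec_norm_le_sum[of "M *\<^sub>v v"] M by simp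
  also have "\<dots> \<le> (\<Sum>i<r. \<Sum>j<c. cmod (M $$ (i, j)))"
  proof (rule sum_mono)
    fix i assume "i \<in> {..<r}"
    hence i: "i < r" by auto
    have "cmod ((M *\<^sub>v v) $ i) = cmod (\<Sum>j<c. M $$ (i, j) * v $ j)"
      using i M v by (simp add: scalar_prod_def lessThan_atLeast0)
    also have "\<dots> \<le> (\<Sum>j<c. cmod (M $$ (i, j) * v $ j))" by (rule norm_sum)
    also have "\<dots> \<le> (\<Sum>j<c. cmod (M $$ (i, j)))"
    proof (rule sum_mono)
      fix j assume "j \<in> {..<c}"
      hence "cmod (v $ j) \<le> 1" using vj by auto
      thus "cmod (M $$ (i, j) * v $ j) \<le> cmod (M $$ (i, j))"
        by (simp add: norm_mult mult_left_le)
    qed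
    finally show "cmod ((M *\<^sub>v v) $ i) \<le> (\<Sum>j<c. cmod (M $$ (i, j)))" .
  qed
  finally show "x \<le> (\<Sum>i<r. \<Sum>j<c. cmod (M $$ (i, j)))" .
qed

lemma op_norm_le0:
  assumes M: "M \<in> carrier_mat r c" and le: "op_norm M \<le> 0"
  shows "M = 0\<^sub>m r c"
proof (rule eq_matI)
  fix i j assume "i < dim_row (0\<^sub>m r c :: complex mat)" "j < dim_col (0\<^sub>m r c :: complex mat)"
  hence i: "i < r" and j: "j < c" by auto
  have un: "cvec_norm (unit_vec c j) \<le> 1"
  proof -
    have "(\<Sum>k<c. (cmod (unit_vec c j $ k))\<^sup>2) = (\<Sum>k<c. if k = j then 1 else 0)"
      by (rule sum.cong) (auto simp: unit_vec_def)
    also have "\<dots> = 1" using j by simp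
    finally show ?thesis by (simp add: cvec_norm_def)
  qed
  have "cvec_norm (M *\<^sub>v unit_vec c j) \<in> {cvec_norm (M *\<^sub>v v) | v. v \<in> carrier_vec (dim_col M) \<and> cvec_norm v \<le> 1}"
    using un M by auto
  hence "cvec_norm (M *\<^sub>v unit_vec c j) \<le> op_norm M"
    unfolding op_norm_def by (rule cSup_upper[OF _ op_norm_bdd[OF M]])
  hence "cvec_norm (M *\<^sub>v unit_vec c j) \<le> 0" using le by simp
  moreover have "cmod ((M *\<^sub>v unit_vec c j) $ i) \<le> cvec_norm (M *\<^sub>v unit_vec c j)"
    by (rule cvec_norm_comp) (use M i in simp)
  moreover have "(M *\<^sub>v unit_vec c j) $ i = M $$ (i, j)" using M i j by simp
  ultimately have "cmod (M $$ (i, j)) \<le> 0" by (metis order.trans)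
  thus "M $$ (i, j) = 0\<^sub>m r c $$ (i, j)" using i j by simp
qed (use M in auto)

lemma op_norm_zero: "op_norm (0\<^sub>m r c :: complex mat) = 0"
proof -
  let ?S = "{cvec_norm (0\<^sub>m r c *\<^sub>v v) | v. v \<in> carrier_vec (dim_col (0\<^sub>m r c :: complex mat)) \<and> cvec_norm v \<le> 1}"
  have z: "cvec_norm (0\<^sub>m r c *\<^sub>v v) = 0" if "v \<in> carrier_vec c" for v :: "complex vec"
    using that by (simp add: cvec_norm_def scalar_prod_def)
  have "cvec_norm (0\<^sub>v c :: complex vec) \<le> 1" by (simp add: cvec_norm_def)
  hence in0: "0 \<in> ?S" using z[of "0\<^sub>v c"] by (intro CollectI exI[of _ "0\<^sub>v c"]) auto
  have le: "x \<le> 0" if "x \<in> ?S" for x using that z by auto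
  have "Sup ?S \<le> 0" by (rule cSup_least) (use in0 le in auto)
  moreover have "0 \<le> Sup ?S" by (rule cSup_upper[OF in0]) (use le in \<open>auto simp: bdd_above_def\<close>)
  ultimately show ?thesis unfolding op_norm_def by linarith
qed

lemma top_block_lift:
  assumes M: "M \<in> carrier_mat (2^(n+a)) (2^(n+a))"
  shows "top_block n (a+3) (kron M (1\<^sub>m 8)) = top_block n a M"
proof (rule eq_matI)
  fix i j assume "i < dim_row (top_block n a M)" "j < dim_col (top_block n a M)"
  hence i: "i < 2^n" and j: "j < 2^n" by (auto simp: top_block_def)
  have e: "(2::nat)^(a+3) = 2^a * 8" by (simp add: power_add)
  have lt: "k * 2^a < 2^(n+a)" if "k < 2^n" for k :: nat
    using that by (simp add: power_add)
  have i8: "i * 2^(a+3) < 2^(n+a) * 8" and j8: "j * 2^(a+3) < 2^(n+a) * 8"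
    using lt[OF i] lt[OF j] unfolding e by linarith+
  have "top_block n (a+3) (kron M (1\<^sub>m 8)) $$ (i, j) = kron M (1\<^sub>m 8) $$ (i * 2^(a+3), j * 2^(a+3))"
    using i j by (simp add: top_block_def)
  also have "\<dots> = M $$ (i * 2^a, j * 2^a)"
  proof -
    have "kron M (1\<^sub>m 8) $$ (i * 2^(a+3), j * 2^(a+3)) = (if (i * 2^(a+3)) mod 8 = (j * 2^(a+3)) mod 8
       then M $$ ((i * 2^(a+3)) div 8, (j * 2^(a+3)) div 8) else 0)"
      by (rule kron_one_index[OF M _ i8 j8]) simp
    moreover have "(i * 2^(a+3)) mod 8 = 0" "(j * 2^(a+3)) mod 8 = 0"
      "(i * 2^(a+3)) div 8 = i * 2^a" "(j * 2^(a+3)) div 8 = j * 2^a"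
      unfolding e by (simp_all add: mult.assoc[symmetric])
    ultimately show ?thesis by simp
  qed
  also have "\<dots> = top_block n a M $$ (i, j)" using i j by (simp add: top_block_def)
  finally show "top_block n (a+3) (kron M (1\<^sub>m 8)) $$ (i, j) = top_block n a M $$ (i, j)" .
qed (auto simp: top_block_def)

lemma cadj_cadj: "cadj (cadj M) = M"
  by (rule eq_matI) auto

lemma unitary_cadj: "unitary_mat d U \<Longrightarrow> unitary_mat d (cadj U)"
  unfolding unitary_mat_def cadj_cadj by auto

abbreviation lift8 :: "complex mat \<Rightarrow> complex mat" where "lift8 X \<equiv> kron X (1\<^sub>m 8)"

theorem lemma5p8:
  shows "\<exists>K::nat. \<forall>n a. n \<ge> 1 \<longrightarrow>
    (\<exists>V0 qs. length qs \<le> K \<and>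
       unitary_mat (2^(n+a+3)) V0 \<and> (\<forall>(q, V) \<in> set qs. unitary_mat (2^(n+a+3)) V) \<and>
       (\<forall>psi U. psi \<in> carrier_vec (2^n) \<and> cvec_norm psi = 1 \<and>
           block_encoding 2 a 0 n U (proj psi) \<longrightarrow>
           block_encoding 1 (a+3) 0 n (run_circuit V0 qs U) (1\<^sub>m (2^n) - 2 \<cdot>\<^sub>m proj psi)))"
proof (rule exI[of _ 6], intro allI impI)
  fix n a :: nat assume "n \<ge> 1"
  define d :: nat where "d = 2^a"
  define m :: nat where "m = 2^n"
  have d0: "0 < d" by (simp add: d_def)
  have Nmd: "(2::nat)^(n+a) = m * d" by (simp add: m_def d_def power_add)
  have N8: "(2::nat)^(n+a+3) = m * d * 8" by (simp add: m_def d_def power_add)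
  define R where "R = dg (m * d) (\<lambda>k. if k mod d = 0 then 1 else -1)"
  define Neg where "Neg = dg (m * d) (\<lambda>k. -1)"
  have uR: "unitary_mat (m * d) R" unfolding R_def by (rule unitary_dg) auto
  have uN: "unitary_mat (m * d) Neg" unfolding Neg_def by (rule unitary_dg) auto
  have [simp]: "dim_row R = m * d" "dim_col R = m * d" "dim_row Neg = m * d" "dim_col Neg = m * d"
    by (simp_all add: R_def Neg_def)
  have uR8: "unitary_mat (2^(n+a+3)) (lift8 R)" unfolding N8 by (rule unitary_lift[OF uR]) simp
  have uN8: "unitary_mat (2^(n+a+3)) (lift8 Neg)" unfolding N8 by (rule unitary_lift[OF uN]) simp
  let ?qs = "[(QU, lift8 R), (QUinv, lift8 R), (QU, lift8 R), (QUinv, lift8 R), (QU, lift8 R), (QUinv, lift8 Neg)]"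
  show "\<exists>V0 qs. length qs \<le> 6 \<and>
       unitary_mat (2^(n+a+3)) V0 \<and> (\<forall>(q, V) \<in> set qs. unitary_mat (2^(n+a+3)) V) \<and>
       (\<forall>psi U. psi \<in> carrier_vec (2^n) \<and> cvec_norm psi = 1 \<and>
           block_encoding 2 a 0 n U (proj psi) \<longrightarrow>
           block_encoding 1 (a+3) 0 n (run_circuit V0 qs U) (1\<^sub>m (2^n) - 2 \<cdot>\<^sub>m proj psi))"
  proof (rule exI[of _ "lift8 R"], rule exI[of _ ?qs], intro conjI allI impI)
    show "length ?qs \<le> 6" by simp
    show "unitary_mat (2^(n+a+3)) (lift8 R)" by (rule uR8)
    show "\<forall>(q, V) \<in> set ?qs. unitary_mat (2^(n+a+3)) V" using uR8 uN8 by auto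
    fix psi U
    assume H: "psi \<in> carrier_vec (2^n) \<and> cvec_norm psi = 1 \<and> block_encoding 2 a 0 n U (proj psi)"
    hence psi: "psi \<in> carrier_vec m" and pn: "cvec_norm psi = 1" and uU: "unitary_mat (m * d) U"
      and on: "op_norm (complex_of_real 2 \<cdot>\<^sub>m top_block n a U - proj psi) \<le> 0"
      by (auto simp: block_encoding_def m_def Nmd)
    have Ucar: "U \<in> carrier_mat (m * d) (m * d)" using uU by (simp add: unitary_mat_def)
    have [simp]: "dim_row U = m * d" "dim_col U = m * d" using Ucar by auto
    have uCU: "unitary_mat (m * d) (cadj U)" by (rule unitary_cadj[OF uU])
    have dpsi: "dim_vec psi = m" using psi by auto
    have nrm: "(\<Sum>l<m. (cmod (psi $ l))\<^sup>2) = 1"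
    proof -
      have "sqrt (\<Sum>l<m. (cmod (psi $ l))\<^sup>2) = 1" using pn dpsi by (simp add: cvec_norm_def)
      thus ?thesis by simp
    qed
    have zero: "complex_of_real 2 \<cdot>\<^sub>m top_block n a U - proj psi = 0\<^sub>m m m"
      by (rule op_norm_le0[OF _ on]) (use dpsi in \<open>auto simp: top_block_def proj_def m_def\<close>)
    have top: "U $$ (i * d, j * d) = (1/2) * (psi $ i * cnj (psi $ j))" if "i < m" "j < m" for i j
    proof -
      have "(complex_of_real 2 \<cdot>\<^sub>m top_block n a U - proj psi) $$ (i, j) = 0"
        unfolding zero using that by simp
      thus ?thesis using that dpsi apply (simp add: top_block_def proj_def m_def d_def)
        by (metis mult.commute)
    qed
    let ?Wl = "Neg * cadj U * (R * U * (R * cadj U * (R * U * (R * cadj U * (R * U * R)))))"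
    have lm: "lift8 A * lift8 B = lift8 (A * B)" if "dim_row A = m * d" "dim_col A = m * d"
      "dim_row B = m * d" "dim_col B = m * d" for A B
      by (rule lift_mult) (use that in \<open>auto intro: carrier_matI\<close>)
    have run: "run_circuit (lift8 R) ?qs U = lift8 ?Wl"
      by (simp add: lm)
    have Wcar: "?Wl \<in> carrier_mat (2^(n+a)) (2^(n+a))" unfolding Nmd by (rule carrier_matI) simp_all
    have uW: "unitary_mat (m * d) ?Wl"
      by (intro unitary_mult uR uN uU uCU)
    have tb: "top_block n (a+3) (run_circuit (lift8 R) ?qs U) = 1\<^sub>m (2^n) - 2 \<cdot>\<^sub>m proj psi"
      unfolding run top_block_lift[OF Wcar]
    proof (rule eq_matI)
      fix i j assume "i < dim_row (1\<^sub>m (2^n) - 2 \<cdot>\<^sub>m proj psi)" "j < dim_col (1\<^sub>m (2^n) - 2 \<cdot>\<^sub>m proj psi)"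
      hence i: "i < m" and j: "j < m" using dpsi by (auto simp: m_def proj_def)
      have "top_block n a ?Wl $$ (i, j) = ?Wl $$ (i * d, j * d)" using i j by (simp add: top_block_def m_def d_def)
      also have "\<dots> = (Neg * (cadj U * (R * (U * (R * (cadj U * (R * (U * (R * (cadj U * (R * (U * R)))))))))))) $$ (i * d, j * d)"
        by (simp add: assoc_d)
      also have "\<dots> = (if i = j then 1 else 0) - 2 * (psi $ i * cnj (psi $ j))"
        by (rule core[OF d0 nrm uU top R_def Neg_def i j])
      also have "\<dots> = (1\<^sub>m (2^n) - 2 \<cdot>\<^sub>m proj psi) $$ (i, j)"
        using i j dpsi by (simp add: proj_def m_def)
      finally show "top_block n a ?Wl $$ (i, j) = (1\<^sub>m (2^n) - 2 \<cdot>\<^sub>m proj psi) $$ (i, j)" .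
    qed (use dpsi in \<open>auto simp: top_block_def proj_def m_def\<close>)
    show "block_encoding 1 (a+3) 0 n (run_circuit (lift8 R) ?qs U) (1\<^sub>m (2^n) - 2 \<cdot>\<^sub>m proj psi)"
      unfolding block_encoding_def
    proof (intro conjI)
      show "unitary_mat (2^(n+(a+3))) (run_circuit (lift8 R) ?qs U)"
        unfolding run using unitary_lift[OF uW, of 8] N8 by (simp add: add.assoc)
      show "1\<^sub>m (2^n) - 2 \<cdot>\<^sub>m proj psi \<in> carrier_mat (2^n) (2^n)"
        using dpsi by (auto simp: proj_def m_def)
      have "complex_of_real 1 \<cdot>\<^sub>m top_block n (a+3) (run_circuit (lift8 R) ?qs U) - (1\<^sub>m (2^n) - 2 \<cdot>\<^sub>m proj psi)
          = 0\<^sub>m (2^n) (2^n)"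
        unfolding tb by (rule eq_matI) (use dpsi in \<open>auto simp: proj_def m_def\<close>)
      thus "op_norm (complex_of_real 1 \<cdot>\<^sub>m top_block n (a+3) (run_circuit (lift8 R) ?qs U) - (1\<^sub>m (2^n) - 2 \<cdot>\<^sub>m proj psi)) \<le> 0"
        by (simp add: op_norm_zero)
    qed
  qed
qed

end
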